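(* Let $\Sigma(B)\subset\Sigma(C)\subset(\mathbb{N}^* )^{\mathbb{Z}}$ be two transitive and symmetric subshifts of finite type. Let $x\in\mathbb{R}$ be such that $m(\beta)\le x$ for all $\beta\in\Sigma(B)$. Suppose that $\gamma\in\Sigma(C)$ satisfies $m(\gamma)=\lambda_0(\gamma)=m>x$ and that $\gamma$ connects both positively and negatively to $B$. Then $m\in L$.
   Context: $\mathbb{N}^*$ denotes the positive integers. For $\underline a=(a_n)_{n\in\mathbb{Z}}\in(\mathbb{N}^* )^{\mathbb{Z}}$: $\lambda_0(\underline a)=[a_0;a_1,a_2,\dots]+[0;a_{-1},a_{-2},\dots]$; $\sigma$ is the left shift; $m(\underline a)=\sup_{n\in\mathbb{Z}}\lambda_0(\sigma^n\underline a)$ (Markov value), $\ell(\underline a)=\limsup_{n\to\infty}\lambda_0(\sigma^n\underline a)$ (Lagrange value); $L=\{\ell(\underline a):\underline a\in(\mathbb{N}^* )^{\mathbb{Z}}\}$ is the Lagrange spectrum. For a subshift $\Sigma(A)\subset(\mathbb{N}^* )^{\mathbb{Z}}$, let $\Sigma^+(A)$ be the set of one-sided sequences $(\theta_1,\theta_2,\dots)$ with $(\theta_n)_{n\in\mathbb{Z}}\in\Sigma(A)$, $K(A)=\{[0;\theta_1,\theta_2,\dots]:(\theta_n)\in\Sigma(A)\}$ and $K^-(A)=\{[0;\theta_{-1},\theta_{-2},\dots]:(\theta_n)\in\Sigma(A)\}$; the subshift is called symmetric if $K(A)=K^-(A)$. A sequence $\alpha\in\Sigma(C)$ with $m(\alpha)=\lambda_0(\alpha)$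 connects positively to $B$ if for every $k\in\mathbb{N}$ there exist a finite word $\tau$ and $\upsilon\in\Sigma^+(B)$ such that the bi-infinite sequence $\tilde\alpha:=\dots\alpha_{-2}\alpha_{-1}\alpha_0\dots\alpha_k\tau\upsilon$ (which agrees with $\alpha$ at indices $\le k$ and is followed by $\tau$ and then $\upsilon$) satisfies $m(\tilde\alpha)<m(\alpha)+2^{-k}$. It connects negatively to $B$ if the reversed sequence $\alpha^t=(\alpha_{-n})_{n\in\mathbb{Z}}$ connects positively to $B$. *)

theory Defs
  imports Complex_Main "HOL-Library.Liminf_Limsup" "HOL-Library.Extended_Real"
begin

type_synonym bseq = "int \<Rightarrow> nat"

fun cfrac_fin :: "nat \<Rightarrow> (nat \<Rightarrow> nat) \<Rightarrow> real" where
  "cfrac_fin 0 a = real (a 0)"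
| "cfrac_fin (Suc n) a = real (a 0) + 1 / cfrac_fin n (\<lambda>k. a (Suc k))"

definition cfrac :: "(nat \<Rightarrow> nat) \<Rightarrow> real" where
  "cfrac a = lim (\<lambda>n. cfrac_fin n a)"

text \<open>[0; a1, a2, ...] = 1 / [a1; a2, ...].\<close>
definition cfrac0 :: "(nat \<Rightarrow> nat) \<Rightarrow> real" where
  "cfrac0 a = 1 / cfrac a"

definition positive_seq :: "bseq \<Rightarrow> bool" where
  "positive_seq \<theta> \<longleftrightarrow> (\<forall>n. \<theta> n \<ge> 1)"

definition lambda0 :: "bseq \<Rightarrow> real" where
  "lambda0 \<theta> = cfrac (\<lambda>k. \<theta> (int k)) + cfrac0 (\<lambda>k. \<theta> (- int k - 1))"

definition shiftn :: "int \<Rightarrow> bseq \<Rightarrow> bseq" where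
  "shiftn n \<theta> = (\<lambda>k. \<theta> (k + n))"

definition markov :: "bseq \<Rightarrow> ereal" where
  "markov \<theta> = (SUP n::int. ereal (lambda0 (shiftn n \<theta>)))"

definition lagrange :: "bseq \<Rightarrow> ereal" where
  "lagrange \<theta> = limsup (\<lambda>n::nat. ereal (lambda0 (shiftn (int n) \<theta>)))"

definition lagrange_spectrum :: "real set" where
  "lagrange_spectrum = {l. \<exists>\<theta>. positive_seq \<theta> \<and> lagrange \<theta> = ereal l}"

definition sft :: "bseq set \<Rightarrow> bool" where
  "sft S \<longleftrightarrow> (\<exists>N::nat. \<exists>W :: nat list set. N \<ge> 1 \<and> finite W \<and>
      (\<forall>w\<in>W. \<forall>c\<in>set w. c \<ge> 1) \<and>
      S = {\<theta>. \<forall>n::int. map (\<lambda>i. \<theta> (n + int i)) [0..<N] \<in> W})"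

text \<open>Topological transitivity: any admissible word can be followed (later) by any
  other admissible word within one sequence of the subshift.\<close>
definition transitive_shift :: "bseq set \<Rightarrow> bool" where
  "transitive_shift S \<longleftrightarrow> (\<forall>\<theta>1\<in>S. \<forall>\<theta>2\<in>S. \<forall>a b :: int. \<forall>k::nat.
      \<exists>\<theta>\<in>S. \<exists>p::int. p \<ge> int k \<and>
        (\<forall>i<k. \<theta> (int i) = \<theta>1 (a + int i)) \<and> (\<forall>i<k. \<theta> (p + int i) = \<theta>2 (b + int i)))"

definition Kplus :: "bseq set \<Rightarrow> real set" where
  "Kplus S = {cfrac0 (\<lambda>k. \<theta> (int k)) | \<theta>. \<theta> \<in> S}"

definition Kminus :: "bseq set \<Rightarrow> real set" where
  "Kminus S = {cfrac0 (\<lambda>k. \<theta> (- int k)) | \<theta>. \<theta> \<in> S}"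

text \<open>Note cfrac0 a = [0; a_1, a_2, ...] only reads a_1, a_2, ..., so Kplus uses
  theta_1, theta_2, ... and Kminus uses theta_{-1}, theta_{-2}, ...\<close>
definition symmetric_shift :: "bseq set \<Rightarrow> bool" where
  "symmetric_shift S \<longleftrightarrow> Kplus S = Kminus S"

text \<open>One-sided sequences (theta_1, theta_2, ...), stored with index shifted to start at 0.\<close>
definition Sigma_plus :: "bseq set \<Rightarrow> (nat \<Rightarrow> nat) set" where
  "Sigma_plus S = {(\<lambda>i. \<theta> (int i + 1)) | \<theta>. \<theta> \<in> S}"

text \<open>The sequence ... alpha_{k-1} alpha_k tau upsilon.\<close>
definition glue :: "bseq \<Rightarrow> nat \<Rightarrow> nat list \<Rightarrow> (nat \<Rightarrow> nat) \<Rightarrow> bseq" where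
  "glue \<alpha> k \<tau> \<upsilon> = (\<lambda>n. if n \<le> int k then \<alpha> n
      else if n \<le> int k + int (length \<tau>) then \<tau> ! nat (n - int k - 1)
      else \<upsilon> (nat (n - int k - int (length \<tau>) - 1)))"

definition connects_pos :: "bseq \<Rightarrow> bseq set \<Rightarrow> bool" where
  "connects_pos \<alpha> B \<longleftrightarrow> (\<forall>k::nat. \<exists>\<tau> \<upsilon>. (\<forall>c\<in>set \<tau>. c \<ge> 1) \<and> \<upsilon> \<in> Sigma_plus B \<and>
      markov (glue \<alpha> k \<tau> \<upsilon>) < markov \<alpha> + ereal ((1/2) ^ k))"

definition transpose_seq :: "bseq \<Rightarrow> bseq" where
  "transpose_seq \<alpha> = (\<lambda>n. \<alpha> (- n))"

definition connects_neg :: "bseq \<Rightarrow> bseq set \<Rightarrow> bool" where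
  "connects_neg \<alpha> B \<longleftrightarrow> connects_pos (transpose_seq \<alpha>) B"

end

theory Submission
  imports Defs
begin


definition posn :: "(nat \<Rightarrow> nat) \<Rightarrow> bool" where
  "posn a \<longleftrightarrow> (\<forall>i. a i \<ge> 1)"

lemma posn_tl: "posn a \<Longrightarrow> posn (\<lambda>k. a (Suc k))"
  by (simp add: posn_def)

lemma cf_ge1: "posn a \<Longrightarrow> cfrac_fin n a \<ge> 1"
proof (induction n arbitrary: a)
  case 0 then show ?case by (simp add: posn_def)
next
  case (Suc n)
  have "cfrac_fin n (\<lambda>k. a (Suc k)) \<ge> 1" using Suc posn_tl by blast
  then have "1 / cfrac_fin n (\<lambda>k. a (Suc k)) > 0" by simp
  moreover have "real (a 0) \<ge> 1" using Suc.prems by (simp add: posn_def)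
  ultimately show ?case by (subst cfrac_fin.simps) linarith
qed

lemma recip_diff_le1:
  fixes X Y :: real assumes "X \<ge> 1" "Y \<ge> 1" shows "\<bar>1/X - 1/Y\<bar> \<le> 1"
proof -
  have "0 < 1/X" "1/X \<le> 1" "0 < 1/Y" "1/Y \<le> 1" using assms by auto
  then show ?thesis by linarith
qed

lemma recip_diff_le:
  fixes X Y :: real assumes "X \<ge> 1" "Y \<ge> 1" shows "\<bar>1/X - 1/Y\<bar> \<le> \<bar>X - Y\<bar>"
proof -
  have "\<bar>1/X - 1/Y\<bar> = \<bar>X - Y\<bar> / (X*Y)" using assms
    by (simp add: field_simps abs_minus_commute)
  also have "\<dots> \<le> \<bar>X - Y\<bar> / 1"
  proof (rule divide_left_mono)
    show "1 \<le> X * Y" using assms mult_mono[of 1 X 1 Y] by simp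
  qed (use assms in auto)
  finally show ?thesis by simp
qed

lemma two_step:
  fixes c :: real and X Y :: real
  assumes "c \<ge> 1" "X \<ge> 1" "Y \<ge> 1"
  shows "\<bar>1/(c + 1/X) - 1/(c + 1/Y)\<bar> \<le> \<bar>X - Y\<bar> / 4"
proof -
  have p1: "c*X + 1 \<ge> 2" using assms mult_mono[of 1 c 1 X] by simp
  have p2: "c*Y + 1 \<ge> 2" using assms mult_mono[of 1 c 1 Y] by simp
  have e1: "1/(c+1/X) = X/(c*X+1)" using assms p1 by (simp add: field_simps)
  have e2: "1/(c+1/Y) = Y/(c*Y+1)" using assms p2 by (simp add: field_simps)
  have e3: "X/(c*X+1) - Y/(c*Y+1) = (X - Y)/((c*X+1)*(c*Y+1))" using p1 p2
    by (simp add: field_simps)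
  have "\<bar>1/(c + 1/X) - 1/(c + 1/Y)\<bar> = \<bar>X - Y\<bar> / ((c*X+1)*(c*Y+1))"
    unfolding e1 e2 e3 using p1 p2 by (simp add: abs_divide abs_mult)
  also have "\<dots> \<le> \<bar>X - Y\<bar> / 4"
  proof (rule divide_left_mono)
    show "4 \<le> (c*X+1) * (c*Y+1)" using p1 p2 mult_mono[of 2 "c*X+1" 2 "c*Y+1"] by simp
  qed (use p1 p2 in auto)
  finally show ?thesis .
qed

lemma cf_close:
  "n \<ge> 1 \<Longrightarrow> posn a \<Longrightarrow> posn b \<Longrightarrow> (\<forall>i<n. a i = b i) \<Longrightarrow> n \<le> p \<Longrightarrow> n \<le> q \<Longrightarrow>
   \<bar>cfrac_fin p a - cfrac_fin q b\<bar> \<le> 4 * (1/2)^n"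
proof (induction n arbitrary: a b p q rule: less_induct)
  case (less n)
  obtain p' where p': "p = Suc p'" using less.prems by (cases p) auto
  obtain q' where q': "q = Suc q'" using less.prems by (cases q) auto
  have a0: "a 0 = b 0" using less.prems by auto
  show ?case
  proof (cases "n \<le> 2")
    case True
    have "\<bar>cfrac_fin p a - cfrac_fin q b\<bar> =
        \<bar>1 / cfrac_fin p' (\<lambda>k. a (Suc k)) - 1 / cfrac_fin q' (\<lambda>k. b (Suc k))\<bar>"
      unfolding p' q' using a0 by simp
    also have "\<dots> \<le> 1"
      by (rule recip_diff_le1) (use cf_ge1 posn_tl less.prems in auto)
    also have "1 \<le> 4 * (1/2::real)^n"
    proof -
      have "(1/2::real)^2 \<le> (1/2)^n" using True by (intro power_decreasing) auto
      then have "(1/4::real) \<le> (1/2)^n" by (simp add: power2_eq_square)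
      then show ?thesis by linarith
    qed
    finally show ?thesis .
  next
    case False
    obtain p'' where p'': "p' = Suc p''" using less.prems False p' by (cases p') auto
    obtain q'' where q'': "q' = Suc q''" using less.prems False q' by (cases q') auto
    have a1: "a 1 = b 1" using less.prems False by auto
    define A where "A = (\<lambda>k. a (Suc (Suc k)))"
    define B where "B = (\<lambda>k. b (Suc (Suc k)))"
    have pA: "posn A" and pB: "posn B" using less.prems by (auto simp: posn_def A_def B_def)
    have X: "cfrac_fin p'' A \<ge> 1" "cfrac_fin q'' B \<ge> 1" using cf_ge1 pA pB by auto
    have c1: "real (a 1) \<ge> 1" using less.prems by (simp add: posn_def)
    have IH: "\<bar>cfrac_fin p'' A - cfrac_fin q'' B\<bar> \<le> 4 * (1/2)^(n-2)"
      by (rule less.IH) (use False less.prems p' q' p'' q'' pA pB in \<open>auto simp: A_def B_def\<close>)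
    have "\<bar>cfrac_fin p a - cfrac_fin q b\<bar> =
        \<bar>1/(real (a 1) + 1/cfrac_fin p'' A) - 1/(real (a 1) + 1/cfrac_fin q'' B)\<bar>"
      unfolding p' q' p'' q'' A_def B_def using a0 a1 by simp
    also have "\<dots> \<le> \<bar>cfrac_fin p'' A - cfrac_fin q'' B\<bar> / 4"
      by (rule two_step) (use X c1 in auto)
    also have "\<dots> \<le> 4 * (1/2)^(n-2) / 4" using IH by simp
    also have "\<dots> = 4 * (1/2)^n"
    proof -
      have "n = (n-2) + 2" using False by simp
      then have "(1/2::real)^n = (1/2)^(n-2) * (1/2)^2" by (metis power_add)
      then have "(1/2::real)^n = (1/2)^(n-2) * (1/4)" by (simp add: power2_eq_square)
      then show ?thesis by simp
    qed
    finally show ?thesis .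
  qed
qed

lemma small_pow:
  fixes c e :: real assumes "e > 0"
  shows "\<exists>M\<ge>1. \<forall>n\<ge>M. c * (1/2)^n < e"
proof -
  obtain N where N: "(1/2::real)^N < e / (\<bar>c\<bar> + 1)"
    using real_arch_pow_inv[of "e / (\<bar>c\<bar> + 1)" "1/2"] assms by auto
  have "\<forall>n\<ge>Suc N. c * (1/2)^n < e"
  proof (intro allI impI)
    fix n assume "n \<ge> Suc N"
    have "(1/2::real)^n \<le> (1/2)^N" using \<open>n \<ge> Suc N\<close> by (intro power_decreasing) auto
    then have "(1/2::real)^n < e / (\<bar>c\<bar> + 1)" using N by linarith
    then have "(\<bar>c\<bar> + 1) * (1/2::real)^n < e" by (simp add: field_simps)
    moreover have "c * (1/2::real)^n \<le> (\<bar>c\<bar> + 1) * (1/2)^n"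
      by (intro mult_right_mono) auto
    ultimately show "c * (1/2)^n < e" by linarith
  qed
  then show ?thesis by (intro exI[of _ "Suc N"]) auto
qed

lemma cf_conv: "posn a \<Longrightarrow> (\<lambda>n. cfrac_fin n a) \<longlonglongrightarrow> cfrac a"
proof -
  assume pa: "posn a"
  have "Cauchy (\<lambda>n. cfrac_fin n a)"
  proof (rule CauchyI)
    fix e :: real assume "e > 0"
    then obtain M where M: "M \<ge> 1" "\<forall>n\<ge>M. 4 * (1/2)^n < e" using small_pow by blast
    show "\<exists>M. \<forall>m\<ge>M. \<forall>n\<ge>M. norm (cfrac_fin m a - cfrac_fin n a) < e"
    proof (intro exI allI impI)
      fix m n assume "m \<ge> M" "n \<ge> M"
      have "\<bar>cfrac_fin m a - cfrac_fin n a\<bar> \<le> 4 * (1/2)^M"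
        by (rule cf_close) (use M pa \<open>m \<ge> M\<close> \<open>n \<ge> M\<close> in auto)
      then show "norm (cfrac_fin m a - cfrac_fin n a) < e" using M by auto
    qed
  qed
  then have "convergent (\<lambda>n. cfrac_fin n a)" by (simp add: Cauchy_convergent_iff)
  then show ?thesis unfolding cfrac_def by (simp add: convergent_LIMSEQ_iff)
qed

lemma cfrac_ge1: "posn a \<Longrightarrow> cfrac a \<ge> 1"
  by (rule LIMSEQ_le_const[OF cf_conv]) (auto intro: cf_ge1)

lemma cfrac_rec: "posn a \<Longrightarrow> cfrac a = real (a 0) + 1 / cfrac (\<lambda>k. a (Suc k))"
proof -
  assume pa: "posn a"
  have t: "(\<lambda>n. cfrac_fin n (\<lambda>k. a (Suc k))) \<longlonglongrightarrow> cfrac (\<lambda>k. a (Suc k))"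
    using cf_conv posn_tl pa by blast
  have ne: "cfrac (\<lambda>k. a (Suc k)) \<noteq> 0" using cfrac_ge1 posn_tl pa by fastforce
  have "(\<lambda>n. real (a 0) + 1 / cfrac_fin n (\<lambda>k. a (Suc k))) \<longlonglongrightarrow> real (a 0) + 1 / cfrac (\<lambda>k. a (Suc k))"
    by (intro tendsto_intros t ne)
  then have "(\<lambda>n. cfrac_fin (Suc n) a) \<longlonglongrightarrow> real (a 0) + 1 / cfrac (\<lambda>k. a (Suc k))" by simp
  moreover have "(\<lambda>n. cfrac_fin (Suc n) a) \<longlonglongrightarrow> cfrac a"
    using cf_conv[OF pa] by (rule LIMSEQ_Suc)
  ultimately show ?thesis using LIMSEQ_unique by blast
qed

lemma cfrac_gt1: "posn a \<Longrightarrow> cfrac a > 1"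
proof -
  assume pa: "posn a"
  have "cfrac (\<lambda>k. a (Suc k)) \<ge> 1" using cfrac_ge1 posn_tl pa by blast
  then have "1 / cfrac (\<lambda>k. a (Suc k)) > 0" by simp
  moreover have "real (a 0) \<ge> 1" using pa by (simp add: posn_def)
  ultimately show ?thesis using cfrac_rec[OF pa] by linarith
qed

lemma cfrac_close:
  assumes "n \<ge> 1" "posn a" "posn b" "\<forall>i<n. a i = b i"
  shows "\<bar>cfrac a - cfrac b\<bar> \<le> 4 * (1/2)^n"
proof -
  have "(\<lambda>p. \<bar>cfrac_fin p a - cfrac_fin p b\<bar>) \<longlonglongrightarrow> \<bar>cfrac a - cfrac b\<bar>"
    by (intro tendsto_intros cf_conv assms)
  moreover have "\<forall>p\<ge>n. \<bar>cfrac_fin p a - cfrac_fin p b\<bar> \<le> 4 * (1/2)^n"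
    using cf_close assms by blast
  ultimately show ?thesis by (intro LIMSEQ_le_const2) auto
qed

lemma cfrac_inj0: "posn a \<Longrightarrow> posn b \<Longrightarrow> cfrac a = cfrac b \<Longrightarrow> a 0 = b 0"
proof -
  assume pa: "posn a" and pb: "posn b" and e: "cfrac a = cfrac b"
  have ta: "cfrac (\<lambda>k. a (Suc k)) > 1" using cfrac_gt1 posn_tl pa by blast
  have tb: "cfrac (\<lambda>k. b (Suc k)) > 1" using cfrac_gt1 posn_tl pb by blast
  have "0 < 1 / cfrac (\<lambda>k. a (Suc k))" "1 / cfrac (\<lambda>k. a (Suc k)) < 1" using ta by auto
  then have fa: "floor (cfrac a) = int (a 0)" unfolding cfrac_rec[OF pa] by (simp add: floor_eq_iff)
  have "0 < 1 / cfrac (\<lambda>k. b (Suc k))" "1 / cfrac (\<lambda>k. b (Suc k)) < 1" using tb by auto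
  then have fb: "floor (cfrac b) = int (b 0)" unfolding cfrac_rec[OF pb] by (simp add: floor_eq_iff)
  show ?thesis using fa fb e by simp
qed

lemma cfrac_inj: "posn a \<Longrightarrow> posn b \<Longrightarrow> cfrac a = cfrac b \<Longrightarrow> a n = b n"
proof (induction n arbitrary: a b)
  case 0
  then show ?case using cfrac_inj0 by blast
next
  case (Suc n)
  have a0: "a 0 = b 0" using cfrac_inj0 Suc.prems by blast
  have "1 / cfrac (\<lambda>k. a (Suc k)) = 1 / cfrac (\<lambda>k. b (Suc k))"
    using cfrac_rec[OF Suc.prems(1)] cfrac_rec[OF Suc.prems(2)] Suc.prems(3) a0 by simp
  then have "cfrac (\<lambda>k. a (Suc k)) = cfrac (\<lambda>k. b (Suc k))" by simp
  then have "(\<lambda>k. a (Suc k)) n = (\<lambda>k. b (Suc k)) n"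
    using Suc.IH posn_tl Suc.prems by blast
  then show ?case by simp
qed



lemma pos_posn: "positive_seq \<theta> \<Longrightarrow> posn (\<lambda>k. \<theta> (f k))"
  by (simp add: positive_seq_def posn_def)

lemma pos_shift: "positive_seq \<theta> \<Longrightarrow> positive_seq (shiftn s \<theta>)"
  by (simp add: positive_seq_def shiftn_def)

lemma pos_transpose: "positive_seq \<theta> \<Longrightarrow> positive_seq (transpose_seq \<theta>)"
  by (simp add: positive_seq_def transpose_seq_def)

lemma lambda0_rec:
  assumes "positive_seq \<theta>"
  shows "lambda0 \<theta> = real (\<theta> 0) + 1 / cfrac (\<lambda>k. \<theta> (int k + 1)) + 1 / cfrac (\<lambda>k. \<theta> (- int k - 1))"
proof -
  have "cfrac (\<lambda>k. \<theta> (int k)) = real (\<theta> 0) + 1 / cfrac (\<lambda>k. \<theta> (int (Suc k)))"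
    using cfrac_rec[OF pos_posn[OF assms, of int]] by simp
  moreover have "(\<lambda>k. \<theta> (int (Suc k))) = (\<lambda>k. \<theta> (int k + 1))" by (simp add: add.commute)
  ultimately show ?thesis unfolding lambda0_def cfrac0_def by simp
qed

lemma lambda0_close:
  assumes "positive_seq \<theta>" "positive_seq \<theta>'" "w \<ge> 1"
    and ag: "\<forall>n. - int w \<le> n \<and> n \<le> int w \<longrightarrow> \<theta> n = \<theta>' n"
  shows "\<bar>lambda0 \<theta> - lambda0 \<theta>'\<bar> \<le> 8 * (1/2)^w"
proof -
  have r: "\<bar>cfrac (\<lambda>k. \<theta> (int k)) - cfrac (\<lambda>k. \<theta>' (int k))\<bar> \<le> 4 * (1/2)^(Suc w)"
    by (rule cfrac_close) (use assms pos_posn in auto)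
  have l: "\<bar>cfrac (\<lambda>k. \<theta> (- int k - 1)) - cfrac (\<lambda>k. \<theta>' (- int k - 1))\<bar> \<le> 4 * (1/2)^w"
    by (rule cfrac_close) (use assms pos_posn in auto)
  have l2: "\<bar>cfrac0 (\<lambda>k. \<theta> (- int k - 1)) - cfrac0 (\<lambda>k. \<theta>' (- int k - 1))\<bar>
      \<le> \<bar>cfrac (\<lambda>k. \<theta> (- int k - 1)) - cfrac (\<lambda>k. \<theta>' (- int k - 1))\<bar>"
    unfolding cfrac0_def by (rule recip_diff_le; rule cfrac_ge1; rule pos_posn; rule assms)
  have "(1/2::real)^(Suc w) \<le> (1/2)^w" by (intro power_decreasing) auto
  then show ?thesis using r l l2 unfolding lambda0_def by linarith
qed

lemma shiftn_shiftn: "shiftn a (shiftn b \<theta>) = shiftn (a + b) \<theta>"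
  by (simp add: shiftn_def algebra_simps)

lemma shiftn_0: "shiftn 0 \<theta> = \<theta>"
  by (simp add: shiftn_def)

lemma lambda0_close_shift:
  assumes "positive_seq \<theta>" "positive_seq \<theta>'" "w \<ge> 1"
    and ag: "\<forall>t. n - int w \<le> t \<and> t \<le> n + int w \<longrightarrow> \<theta> t = \<theta>' t"
  shows "\<bar>lambda0 (shiftn n \<theta>) - lambda0 (shiftn n \<theta>')\<bar> \<le> 8 * (1/2)^w"
proof (rule lambda0_close)
  show "\<forall>t. - int w \<le> t \<and> t \<le> int w \<longrightarrow> shiftn n \<theta> t = shiftn n \<theta>' t"
    using ag by (auto simp: shiftn_def)
qed (use assms pos_shift in auto)

lemma lambda0_transpose:
  assumes "positive_seq \<alpha>"
  shows "lambda0 (shiftn n (transpose_seq \<alpha>)) = lambda0 (shiftn (-n) \<alpha>)"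
proof -
  have p1: "positive_seq (shiftn n (transpose_seq \<alpha>))" using assms pos_shift pos_transpose by blast
  have p2: "positive_seq (shiftn (-n) \<alpha>)" using assms pos_shift by blast
  have e1: "(\<lambda>k. shiftn n (transpose_seq \<alpha>) (int k + 1)) = (\<lambda>k. shiftn (-n) \<alpha> (- int k - 1))"
    by (rule ext) (simp add: shiftn_def transpose_seq_def algebra_simps; smt (verit))
  have e2: "(\<lambda>k. shiftn n (transpose_seq \<alpha>) (- int k - 1)) = (\<lambda>k. shiftn (-n) \<alpha> (int k + 1))"
    by (rule ext) (simp add: shiftn_def transpose_seq_def algebra_simps)
  have e3: "shiftn n (transpose_seq \<alpha>) 0 = shiftn (-n) \<alpha> 0"
    by (simp add: shiftn_def transpose_seq_def)
  show ?thesis unfolding lambda0_rec[OF p1] lambda0_rec[OF p2] e1 e2 e3 by simp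
qed

lemma lambda0_le_markov: "ereal (lambda0 (shiftn n \<theta>)) \<le> markov \<theta>"
  unfolding markov_def by (rule SUP_upper) auto

lemma markov_shift: "markov (shiftn s \<theta>) = markov \<theta>"
proof (rule antisym)
  show "markov (shiftn s \<theta>) \<le> markov \<theta>"
    unfolding markov_def[of "shiftn s \<theta>"] shiftn_shiftn
    by (rule SUP_least) (rule lambda0_le_markov)
  show "markov \<theta> \<le> markov (shiftn s \<theta>)"
    unfolding markov_def[of \<theta>]
  proof (rule SUP_least)
    fix n :: int
    have "shiftn n \<theta> = shiftn (n - s) (shiftn s \<theta>)" by (simp add: shiftn_shiftn)
    then show "ereal (lambda0 (shiftn n \<theta>)) \<le> markov (shiftn s \<theta>)"
      using lambda0_le_markov by metis
  qed
qed

lemma markov_transpose: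
  assumes "positive_seq \<alpha>"
  shows "markov (transpose_seq \<alpha>) = markov \<alpha>"
proof (rule antisym)
  show "markov (transpose_seq \<alpha>) \<le> markov \<alpha>"
    unfolding markov_def[of "transpose_seq \<alpha>"] lambda0_transpose[OF assms]
    by (rule SUP_least) (rule lambda0_le_markov)
  show "markov \<alpha> \<le> markov (transpose_seq \<alpha>)"
    unfolding markov_def[of \<alpha>]
  proof (rule SUP_least)
    fix n :: int
    have "lambda0 (shiftn n \<alpha>) = lambda0 (shiftn (-n) (transpose_seq \<alpha>))"
      using lambda0_transpose[OF assms, of "-n"] by simp
    then show "ereal (lambda0 (shiftn n \<alpha>)) \<le> markov (transpose_seq \<alpha>)"
      using lambda0_le_markov by metis
  qed
qed



definition segof :: "(nat \<Rightarrow> int) \<Rightarrow> int \<Rightarrow> nat" where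
  "segof u t = (LEAST j. t < u (Suc j))"

definition gall :: "(nat \<Rightarrow> bseq) \<Rightarrow> (nat \<Rightarrow> int) \<Rightarrow> bseq" where
  "gall \<psi> u t = \<psi> (segof u t) t"

lemma u_grow:
  fixes u :: "nat \<Rightarrow> int"
  assumes gap: "\<forall>j. u j < u (Suc j)"
  shows "u i + int k \<le> u (i + k)"
proof (induction k)
  case 0 then show ?case by simp
next
  case (Suc k)
  then show ?case using gap[rule_format, of "i + k"] by simp
qed

lemma u_mono:
  fixes u :: "nat \<Rightarrow> int"
  assumes gap: "\<forall>j. u j < u (Suc j)" and "i \<le> j"
  shows "u i \<le> u j"
  using u_grow[OF gap, of i "j - i"] assms(2) by simp

lemma segof_exists:
  fixes u :: "nat \<Rightarrow> int"
  assumes gap: "\<forall>j. u j < u (Suc j)"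
  shows "\<exists>j. t < u (Suc j)"
proof -
  have "u 0 + int (nat (t - u 0 + 1)) \<le> u (nat (t - u 0 + 1))" using u_grow[OF gap, of 0 "nat (t - u 0 + 1)"] by simp
  moreover have "u (nat (t - u 0 + 1)) \<le> u (Suc (nat (t - u 0 + 1)))" using gap less_imp_le by blast
  ultimately show ?thesis by (intro exI[of _ "nat (t - u 0 + 1)"]) linarith
qed

lemma segof_eq:
  fixes u :: "nat \<Rightarrow> int"
  assumes gap: "\<forall>j. u j < u (Suc j)" and "u j \<le> t" "t < u (Suc j)"
  shows "segof u t = j"
  unfolding segof_def
proof (rule Least_equality)
  show "t < u (Suc j)" by fact
  fix y assume "t < u (Suc y)"
  show "j \<le> y"
  proof (rule ccontr)
    assume "\<not> j \<le> y"
    then have "u (Suc y) \<le> u j" using u_mono[OF gap] by simp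
    then show False using assms \<open>t < u (Suc y)\<close> by simp
  qed
qed

lemma segof_props:
  fixes u :: "nat \<Rightarrow> int"
  assumes gap: "\<forall>j. u j < u (Suc j)" and "u 0 \<le> t"
  shows "u (segof u t) \<le> t \<and> t < u (Suc (segof u t))"
proof -
  obtain j0 where "t < u (Suc j0)" using segof_exists[OF gap] by blast
  then have s1: "t < u (Suc (segof u t))" unfolding segof_def by (rule LeastI)
  have "u (segof u t) \<le> t"
  proof (cases "segof u t")
    case 0 then show ?thesis using assms by simp
  next
    case (Suc k)
    then have "k < segof u t" by simp
    then have "\<not> t < u (Suc k)" unfolding segof_def by (rule not_less_Least)
    then show ?thesis using Suc by simp
  qed
  then show ?thesis using s1 by simp
qed

lemma gall_window:
  fixes u :: "nat \<Rightarrow> int"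
  assumes gap: "\<forall>j. u j + int (w j) < u (Suc j)"
    and wmono: "\<forall>j. w j \<le> w (Suc j)"
    and agree: "\<forall>j t. u (Suc j) - int (w j) \<le> t \<and> t \<le> u (Suc j) + int (w j) \<longrightarrow> \<psi> j t = \<psi> (Suc j) t"
    and j: "j = Suc i" and n: "u j \<le> n" "n < u (Suc j)"
    and t: "n - int (w i) \<le> t" "t \<le> n + int (w i)"
  shows "gall \<psi> u t = \<psi> j t"
proof -
  have gap': "\<forall>j. u j < u (Suc j)"
  proof
    fix j show "u j < u (Suc j)" using gap[rule_format, of j] by linarith
  qed
  consider "t < u j" | "u j \<le> t \<and> t < u (Suc j)" | "u (Suc j) \<le> t" by linarith
  then show ?thesis
  proof cases
    case 1
    have "u i + int (w i) < u j" using gap j by simp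
    then have "u i \<le> t" using t n by linarith
    then have "segof u t = i" using segof_eq[OF gap'] 1 j by simp
    moreover have "\<psi> i t = \<psi> j t" using agree[rule_format, of i t] j t n 1 by simp
    ultimately show ?thesis unfolding gall_def by simp
  next
    case 2
    then have "segof u t = j" using segof_eq[OF gap'] by blast
    then show ?thesis unfolding gall_def by simp
  next
    case 3
    have "w i \<le> w j" "w j \<le> w (Suc j)" using wmono j by auto
    moreover have "u (Suc j) + int (w (Suc j)) < u (Suc (Suc j))" using gap by blast
    ultimately have "t < u (Suc (Suc j))" using t n by linarith
    then have "segof u t = Suc j" using segof_eq[OF gap'] 3 by simp
    moreover have "\<psi> j t = \<psi> (Suc j) t"
    proof (rule agree[rule_format])
      have "w i \<le> w j" using wmono j by auto
      then show "u (Suc j) - int (w j) \<le> t \<and> t \<le> u (Suc j) + int (w j)" using t n 3 by linarith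
    qed
    ultimately show ?thesis unfolding gall_def by simp
  qed
qed



lemma limsup_eq_lemma:
  fixes f :: "nat \<Rightarrow> real" and r :: "nat \<Rightarrow> nat" and m :: real
  assumes up: "\<forall>e::real>0. \<exists>N. \<forall>n\<ge>N. f n \<le> m + e"
    and sm: "strict_mono r"
    and lim: "(\<lambda>i. f (r i)) \<longlonglongrightarrow> m"
  shows "limsup (\<lambda>n. ereal (f n)) = ereal m"
proof (rule antisym)
  show "limsup (\<lambda>n. ereal (f n)) \<le> ereal m"
    unfolding Limsup_le_iff
  proof (intro allI impI)
    fix y :: ereal assume "y > ereal m"
    show "\<forall>\<^sub>F x in sequentially. ereal (f x) < y"
    proof (cases y)
      case (real r')
      then have "r' - m > 0" using \<open>y > ereal m\<close> by simp
      then obtain N where N: "\<forall>n\<ge>N. f n \<le> m + (r' - m)/2" using up by (metis half_gt_zero)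
      have "\<forall>n\<ge>N. ereal (f n) < y"
      proof (intro allI impI)
        fix n assume "n \<ge> N"
        then have "f n \<le> m + (r' - m)/2" using N by blast
        then have "f n < r'" using \<open>r' - m > 0\<close> by (simp add: field_simps)
        then show "ereal (f n) < y" using real by simp
      qed
      then show ?thesis unfolding eventually_sequentially by blast
    next
      case PInf then show ?thesis by simp
    next
      case MInf then show ?thesis using \<open>y > ereal m\<close> by simp
    qed
  qed
  have "(\<lambda>i. ereal (f (r i))) \<longlonglongrightarrow> ereal m" using lim by (rule tendsto_ereal)
  then have "limsup ((\<lambda>n. ereal (f n)) \<circ> r) = ereal m"
    by (intro lim_imp_Limsup) (auto simp: o_def)
  moreover have "limsup ((\<lambda>n. ereal (f n)) \<circ> r) \<le> limsup (\<lambda>n. ereal (f n))"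
    by (rule limsup_subseq_mono[OF sm])
  ultimately show "ereal m \<le> limsup (\<lambda>n. ereal (f n))" by simp
qed

lemma split3:
  fixes j :: nat
  assumes "\<And>i. Q (3*i) \<and> Q (3*i+1) \<and> Q (3*i+2)"
  shows "Q j"
proof -
  have "j = 3*(j div 3) + j mod 3" by simp
  moreover have "j mod 3 = 0 \<or> j mod 3 = 1 \<or> j mod 3 = 2" by arith
  ultimately show ?thesis using assms[of "j div 3"] by (metis add.right_neutral)
qed



lemma construct:
  fixes \<gamma> :: bseq and m :: real and P Nt bet bet2 thJ :: "nat \<Rightarrow> bseq"
    and c c' pJ :: "nat \<Rightarrow> int"
  assumes posg: "positive_seq \<gamma>"
    and posP: "\<forall>k. positive_seq (P k)" and posN: "\<forall>k. positive_seq (Nt k)"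
    and posJ: "\<forall>i. positive_seq (thJ i)"
    and mdef: "m = lambda0 \<gamma>"
    and F1: "\<forall>k n. n \<le> int k \<longrightarrow> P k n = \<gamma> n"
    and F2: "\<forall>k n. n \<ge> c k + 1 \<longrightarrow> P k n = bet k (n - c k)"
    and F3: "\<forall>k n. n \<ge> - int k \<longrightarrow> Nt k n = \<gamma> n"
    and F4: "\<forall>k n. n \<le> - c' k - 1 \<longrightarrow> Nt k n = bet2 k (n + c' k)"
    and cb: "\<forall>k. c k \<ge> int k" and cb': "\<forall>k. c' k \<ge> int k"
    and bP: "\<forall>k n. lambda0 (shiftn n (P k)) \<le> m + (1/2)^k"
    and bN: "\<forall>k n. lambda0 (shiftn n (Nt k)) \<le> m + (1/2)^k"
    and bJ: "\<forall>i n. lambda0 (shiftn n (thJ i)) \<le> m"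
    and J1: "\<forall>i. \<forall>t::nat. t < 2 * Suc i + 1 \<longrightarrow> thJ i (int t) = bet (Suc i) (1 + int t)"
    and J2: "\<forall>i. \<forall>t::nat. t < 2 * Suc i + 1 \<longrightarrow>
              thJ i (pJ i + int t) = bet2 (Suc (Suc i)) (-1 - 2 * int (Suc i) + int t)"
    and pJ: "\<forall>i. pJ i \<ge> 2 * int (Suc i) + 1"
  shows "\<exists>\<theta>. positive_seq \<theta> \<and> lagrange \<theta> = ereal m"
proof -
  define D where "D j = c (Suc j) + c' (Suc (Suc j)) + pJ j + 2 * int (Suc j) + 2" for j
  define Of where "Of i = (\<Sum>j<i. D j)" for i
  have OS: "Of (Suc i) = Of i + D i" for i unfolding Of_def by simp
  have Dpos: "D j \<ge> 1" for j using cb[rule_format, of "Suc j"] cb'[rule_format, of "Suc (Suc j)"] pJ[rule_format, of j]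
    unfolding D_def by linarith
  have Onn: "Of i \<ge> int i" for i
  proof (induction i)
    case 0 then show ?case by (simp add: Of_def)
  next
    case (Suc i) then show ?case using OS[of i] Dpos[of i] by simp
  qed
  define \<psi> where "\<psi> j = (if j mod 3 = 0 then shiftn (- Of (j div 3)) (Nt (Suc (j div 3)))
      else if j mod 3 = 1 then shiftn (- Of (j div 3)) (P (Suc (j div 3)))
      else shiftn (-(Of (j div 3) + c (Suc (j div 3)) + 1)) (thJ (j div 3)))" for j
  define u where "u j = (if j mod 3 = 0 then Of (j div 3) - c' (Suc (j div 3)) - 1 - int (j div 3)
      else if j mod 3 = 1 then Of (j div 3)
      else Of (j div 3) + c (Suc (j div 3)) + 1 + int (Suc (j div 3)))" for j
  define w where "w j = Suc (j div 3)" for j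
  have d0: "(3*i) div 3 = i" "(3*i) mod 3 = 0" for i :: nat by simp_all
  have d1: "(3*i+1) div 3 = i" "(3*i+1) mod 3 = 1" for i :: nat by presburger+
  have d2: "(3*i+2) div 3 = i" "(3*i+2) mod 3 = 2" for i :: nat by presburger+
  have psi0: "\<psi> (3*i) = shiftn (- Of i) (Nt (Suc i))" for i unfolding \<psi>_def using d0 by simp
  have psi1: "\<psi> (3*i+1) = shiftn (- Of i) (P (Suc i))" for i unfolding \<psi>_def using d1 by simp
  have psi2: "\<psi> (3*i+2) = shiftn (-(Of i + c (Suc i) + 1)) (thJ i)" for i unfolding \<psi>_def using d2 by simp
  have u0: "u (3*i) = Of i - c' (Suc i) - 1 - int i" for i unfolding u_def using d0 by simp
  have u1: "u (3*i+1) = Of i" for i unfolding u_def using d1 by simp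
  have u2: "u (3*i+2) = Of i + c (Suc i) + 1 + int (Suc i)" for i unfolding u_def using d2 by simp
  have w0: "w (3*i) = Suc i" "w (3*i+1) = Suc i" "w (3*i+2) = Suc i" for i
    unfolding w_def using d0 d1 d2 by simp_all
  have s2: "Suc (3*i+2) = 3 * Suc i" for i :: nat by simp

  have gap: "\<forall>j. u j + int (w j) < u (Suc j)"
  proof
    fix j show "u j + int (w j) < u (Suc j)"
    proof (rule split3[where Q = "\<lambda>j. u j + int (w j) < u (Suc j)"])
      fix i
      have a: "u (3*i) + int (w (3*i)) < u (Suc (3*i))"
        using u0[of i] u1[of i] w0(1)[of i] cb'[rule_format, of "Suc i"] by simp
      have b: "u (3*i+1) + int (w (3*i+1)) < u (Suc (3*i+1))"
        using u1[of i] u2[of i] w0(2)[of i] cb[rule_format, of "Suc i"] by simp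
      have c: "u (3*i+2) + int (w (3*i+2)) < u (Suc (3*i+2))"
        unfolding s2 using u2[of i] u0[of "Suc i"] w0(3)[of i] OS[of i] pJ[rule_format, of i]
        unfolding D_def by simp
      show "u (3*i) + int (w (3*i)) < u (Suc (3*i)) \<and> u (3*i+1) + int (w (3*i+1)) < u (Suc (3*i+1))
          \<and> u (3*i+2) + int (w (3*i+2)) < u (Suc (3*i+2))" using a b c by blast
    qed
  qed
  have wmono: "\<forall>j. w j \<le> w (Suc j)" unfolding w_def by (simp add: div_le_mono)
  have agree: "\<forall>j t. u (Suc j) - int (w j) \<le> t \<and> t \<le> u (Suc j) + int (w j) \<longrightarrow> \<psi> j t = \<psi> (Suc j) t"
  proof (rule allI)
    fix j show "\<forall>t. u (Suc j) - int (w j) \<le> t \<and> t \<le> u (Suc j) + int (w j) \<longrightarrow> \<psi> j t = \<psi> (Suc j) t"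
    proof (rule split3[where Q = "\<lambda>j. \<forall>t. u (Suc j) - int (w j) \<le> t \<and> t \<le> u (Suc j) + int (w j) \<longrightarrow> \<psi> j t = \<psi> (Suc j) t"])
      fix i
      have a: "\<psi> (3*i) t = \<psi> (Suc (3*i)) t"
        if "u (Suc (3*i)) - int (w (3*i)) \<le> t" "t \<le> u (Suc (3*i)) + int (w (3*i))" for t
      proof -
        have r: "- int (Suc i) \<le> t - Of i" "t - Of i \<le> int (Suc i)" using that u1[of i] w0(1)[of i] by simp_all
        have e: "Suc (3*i) = 3*i+1" by simp
        have "\<psi> (3*i) t = Nt (Suc i) (t - Of i)" unfolding psi0 shiftn_def by simp
        also have "\<dots> = \<gamma> (t - Of i)" using F3 r by blast
        also have "\<dots> = P (Suc i) (t - Of i)" using F1 r by metis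
        also have "\<dots> = \<psi> (Suc (3*i)) t" unfolding e psi1 shiftn_def by simp
        finally show ?thesis .
      qed
      have b: "\<psi> (3*i+1) t = \<psi> (Suc (3*i+1)) t"
        if "u (Suc (3*i+1)) - int (w (3*i+1)) \<le> t" "t \<le> u (Suc (3*i+1)) + int (w (3*i+1))" for t
      proof -
        have r: "Of i + c (Suc i) + 1 \<le> t" "t \<le> Of i + c (Suc i) + 1 + 2 * int (Suc i)"
          using that u2[of i] w0(2)[of i] by simp_all
        define s where "s = nat (t - Of i - c (Suc i) - 1)"
        have si: "int s = t - Of i - c (Suc i) - 1" unfolding s_def using r by simp
        have sl: "s < 2 * Suc i + 1" using si r by linarith
        have "\<psi> (3*i+1) t = P (Suc i) (t - Of i)" unfolding psi1 shiftn_def by simp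
        also have "\<dots> = bet (Suc i) (t - Of i - c (Suc i))" using F2 r by simp
        also have "\<dots> = bet (Suc i) (1 + int s)" using si by simp
        also have "\<dots> = thJ i (int s)" using J1 sl by simp
        also have "\<dots> = \<psi> (Suc (3*i+1)) t"
        proof -
          have e: "Suc (3*i+1) = 3*i+2" by simp
          have "t + - (Of i + c (Suc i) + 1) = int s" using si by simp
          then show ?thesis unfolding e psi2 shiftn_def by simp
        qed
        finally show ?thesis .
      qed
      have c: "\<psi> (3*i+2) t = \<psi> (Suc (3*i+2)) t"
        if "u (Suc (3*i+2)) - int (w (3*i+2)) \<le> t" "t \<le> u (Suc (3*i+2)) + int (w (3*i+2))" for t
      proof -
        have r: "Of (Suc i) - c' (Suc (Suc i)) - 1 - 2 * int (Suc i) \<le> t" "t \<le> Of (Suc i) - c' (Suc (Suc i)) - 1"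
          using that u0[of "Suc i"] w0(3)[of i] unfolding s2 by simp_all
        define s where "s = nat (t - Of (Suc i) + c' (Suc (Suc i)) + 1 + 2 * int (Suc i))"
        have si: "int s = t - Of (Suc i) + c' (Suc (Suc i)) + 1 + 2 * int (Suc i)" unfolding s_def using r by simp
        have sl: "s < 2 * Suc i + 1" using si r by linarith
        have e: "t - (Of i + c (Suc i) + 1) = pJ i + int s" using si OS[of i] unfolding D_def by simp
        have "\<psi> (3*i+2) t = thJ i (t - (Of i + c (Suc i) + 1))" unfolding psi2 shiftn_def
          by (simp add: algebra_simps)
        also have "\<dots> = thJ i (pJ i + int s)" using e by simp
        also have "\<dots> = bet2 (Suc (Suc i)) (-1 - 2 * int (Suc i) + int s)" using J2 sl by blast
        also have "\<dots> = bet2 (Suc (Suc i)) (t - Of (Suc i) + c' (Suc (Suc i)))"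
        proof -
          have "-1 - 2 * int (Suc i) + int s = t - Of (Suc i) + c' (Suc (Suc i))" using si by simp
          then show ?thesis by simp
        qed
        also have "\<dots> = Nt (Suc (Suc i)) (t - Of (Suc i))" using F4 r by simp
        also have "\<dots> = \<psi> (Suc (3*i+2)) t" unfolding s2 psi0 shiftn_def by simp
        finally show ?thesis .
      qed
      show "(\<forall>t. u (Suc (3*i)) - int (w (3*i)) \<le> t \<and> t \<le> u (Suc (3*i)) + int (w (3*i)) \<longrightarrow> \<psi> (3*i) t = \<psi> (Suc (3*i)) t) \<and>
        (\<forall>t. u (Suc (3*i+1)) - int (w (3*i+1)) \<le> t \<and> t \<le> u (Suc (3*i+1)) + int (w (3*i+1)) \<longrightarrow> \<psi> (3*i+1) t = \<psi> (Suc (3*i+1)) t) \<and>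
        (\<forall>t. u (Suc (3*i+2)) - int (w (3*i+2)) \<le> t \<and> t \<le> u (Suc (3*i+2)) + int (w (3*i+2)) \<longrightarrow> \<psi> (3*i+2) t = \<psi> (Suc (3*i+2)) t)"
        using a b c by blast
    qed
  qed
  have posps: "positive_seq (\<psi> j)" for j
    unfolding \<psi>_def using posP posN posJ pos_shift by auto
  have bps: "lambda0 (shiftn t (\<psi> j)) \<le> m + (1/2)^(Suc (j div 3))" for t j
  proof -
    have z: "(0::real) \<le> (1/2)^(Suc (j div 3))" by simp
    consider "j mod 3 = 0" | "j mod 3 = 1" | "j mod 3 \<noteq> 0 \<and> j mod 3 \<noteq> 1" by blast
    then show ?thesis
    proof cases
      case 1
      then have "\<psi> j = shiftn (- Of (j div 3)) (Nt (Suc (j div 3)))" unfolding \<psi>_def by simp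
      then show ?thesis using bN[rule_format, of "t + - Of (j div 3)" "Suc (j div 3)"] by (simp only: shiftn_shiftn)
    next
      case 2
      then have "\<psi> j = shiftn (- Of (j div 3)) (P (Suc (j div 3)))" unfolding \<psi>_def by simp
      then show ?thesis using bP[rule_format, of "t + - Of (j div 3)" "Suc (j div 3)"] by (simp only: shiftn_shiftn)
    next
      case 3
      then have "\<psi> j = shiftn (-(Of (j div 3) + c (Suc (j div 3)) + 1)) (thJ (j div 3))" unfolding \<psi>_def by simp
      then have "lambda0 (shiftn t (\<psi> j)) \<le> m" using bJ by (simp add: shiftn_shiftn)
      then show ?thesis using z by linarith
    qed
  qed
  define \<Theta> where "\<Theta> = gall \<psi> u"
  have posT: "positive_seq \<Theta>" using posps unfolding \<Theta>_def gall_def positive_seq_def by auto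
  have gap': "\<forall>j. u j < u (Suc j)"
  proof
    fix j show "u j < u (Suc j)" using gap[rule_format, of j] by linarith
  qed
  define f where "f n = lambda0 (shiftn (int n) \<Theta>)" for n
  have up: "\<forall>e::real>0. \<exists>N. \<forall>n\<ge>N. f n \<le> m + e"
  proof (intro allI impI)
    fix e :: real assume "e > 0"
    then obtain M where M: "M \<ge> 1" "\<forall>n\<ge>M. 9 * (1/2)^n < e" using small_pow by blast
    show "\<exists>N. \<forall>n\<ge>N. f n \<le> m + e"
    proof (intro exI allI impI)
      fix n assume "n \<ge> nat (u (3*M+1))"
      define t where "t = int n"
      have tb: "u (3*M+1) \<le> t" using \<open>n \<ge> nat (u (3*M+1))\<close> unfolding t_def by linarith
      have "u 0 \<le> u (3*M+1)" using u_mono[OF gap'] by simp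
      then have "u 0 \<le> t" using tb by simp
      define j where "j = segof u t"
      have jt: "u j \<le> t" "t < u (Suc j)" using segof_props[OF gap' \<open>u 0 \<le> t\<close>] unfolding j_def by auto
      have jge: "j \<ge> 3*M+1"
      proof (rule ccontr)
        assume "\<not> j \<ge> 3*M+1"
        then have "u (Suc j) \<le> u (3*M+1)" using u_mono[OF gap'] by simp
        then show False using jt tb by simp
      qed
      obtain i where ji: "j = Suc i" using jge by (cases j) auto
      have wi: "w i \<ge> M" unfolding w_def using ji jge by simp
      have win: "\<forall>s. t - int (w i) \<le> s \<and> s \<le> t + int (w i) \<longrightarrow> \<Theta> s = \<psi> j s"
        unfolding \<Theta>_def using gall_window[OF gap wmono agree ji jt] by blast
      have cl: "\<bar>lambda0 (shiftn t \<Theta>) - lambda0 (shiftn t (\<psi> j))\<bar> \<le> 8 * (1/2)^(w i)"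
        by (rule lambda0_close_shift) (use posT posps win w_def in auto)
      have "(1/2::real)^(Suc (j div 3)) \<le> (1/2)^(w i)"
        unfolding w_def using ji by (intro power_decreasing) (auto simp: div_le_mono)
      then have b1: "lambda0 (shiftn t (\<psi> j)) \<le> m + (1/2)^(w i)" using bps[of t j] by linarith
      have "(1/2::real)^(w i) \<le> (1/2)^M" using wi by (intro power_decreasing) auto
      then have "9 * (1/2::real)^(w i) < e" using M by fastforce
      then show "f n \<le> m + e" using cl b1 unfolding f_def t_def[symmetric] by linarith
    qed
  qed
  define r where "r i = nat (Of i)" for i
  have Onn': "Of i \<ge> 0" for i using Onn[of i] by simp
  have sm: "strict_mono r"
    unfolding strict_mono_Suc_iff
  proof
    fix i show "r i < r (Suc i)" unfolding r_def using OS[of i] Dpos[of i] Onn'[of i] by simp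
  qed
  have fr: "\<bar>f (r i) - m\<bar> \<le> 16 * (1/2)^(Suc i)" for i
  proof -
    have ti: "int (r i) = Of i" unfolding r_def using Onn'[of i] by simp
    have jt: "u (Suc (3*i)) \<le> Of i" "Of i < u (Suc (Suc (3*i)))"
      using u1[of i] gap[rule_format, of "3*i+1"] by simp_all
    have win: "\<forall>s. Of i - int (w (3*i)) \<le> s \<and> s \<le> Of i + int (w (3*i)) \<longrightarrow> \<Theta> s = \<psi> (Suc (3*i)) s"
      unfolding \<Theta>_def using gall_window[OF gap wmono agree refl jt] by blast
    have cl: "\<bar>lambda0 (shiftn (Of i) \<Theta>) - lambda0 (shiftn (Of i) (\<psi> (Suc (3*i))))\<bar> \<le> 8 * (1/2)^(Suc i)"
      by (rule lambda0_close_shift[where w = "Suc i"]) (use posT posps win w0 in auto)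
    have e: "shiftn (Of i) (\<psi> (Suc (3*i))) = P (Suc i)"
    proof -
      have "Suc (3*i) = 3*i+1" by simp
      then have "\<psi> (Suc (3*i)) = shiftn (- Of i) (P (Suc i))" using psi1 by simp
      then show ?thesis by (simp add: shiftn_shiftn shiftn_0)
    qed
    have cl2: "\<bar>lambda0 (P (Suc i)) - lambda0 \<gamma>\<bar> \<le> 8 * (1/2)^(Suc i)"
      by (rule lambda0_close) (use posP posg F1 in auto)
    show ?thesis using cl cl2 unfolding e f_def ti mdef by linarith
  qed
  have lim: "(\<lambda>i. f (r i)) \<longlonglongrightarrow> m"
  proof (rule LIMSEQ_I)
    fix e :: real assume "e > 0"
    then obtain M where M: "M \<ge> 1" "\<forall>n\<ge>M. 16 * (1/2)^n < e" using small_pow by blast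
    show "\<exists>no. \<forall>n\<ge>no. norm (f (r n) - m) < e"
    proof (intro exI allI impI)
      fix n assume "n \<ge> M"
      then have "16 * (1/2::real)^(Suc n) < e" using M by (simp del: power_Suc)
      then show "norm (f (r n) - m) < e" using fr[of n] by simp
    qed
  qed
  have "lagrange \<Theta> = ereal m"
    unfolding lagrange_def using limsup_eq_lemma[OF up sm lim] unfolding f_def by simp
  then show ?thesis using posT by blast
qed



lemma sft_pos: "sft S \<Longrightarrow> \<theta> \<in> S \<Longrightarrow> positive_seq \<theta>"
proof -
  assume "sft S" "\<theta> \<in> S"
  then obtain N W where NW: "N \<ge> 1" "\<forall>w\<in>W. \<forall>c\<in>set w. c \<ge> 1"
    "S = {\<theta>. \<forall>n::int. map (\<lambda>i. \<theta> (n + int i)) [0..<N] \<in> W}"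
    unfolding sft_def by blast
  show "positive_seq \<theta>" unfolding positive_seq_def
  proof
    fix n :: int
    have inW: "map (\<lambda>i. \<theta> (n + int i)) [0..<N] \<in> W" using NW(3) \<open>\<theta> \<in> S\<close> by blast
    have "\<theta> n \<in> set (map (\<lambda>i. \<theta> (n + int i)) [0..<N])"
    proof -
      have "(\<lambda>i. \<theta> (n + int i)) 0 \<in> (\<lambda>i. \<theta> (n + int i)) ` set [0..<N]"
        using NW(1) by (intro imageI) simp
      then show ?thesis by simp
    qed
    then show "\<theta> n \<ge> 1" using NW(2) inW by blast
  qed
qed

lemma sym_rev:
  assumes "symmetric_shift B" "\<forall>\<beta>\<in>B. positive_seq \<beta>" "\<beta>' \<in> B"
  shows "\<exists>\<beta>''\<in>B. \<forall>i::nat. \<beta>' (int i) = \<beta>'' (- int i)"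
proof -
  have "cfrac0 (\<lambda>k. \<beta>' (int k)) \<in> Kplus B" unfolding Kplus_def using assms(3) by auto
  then have "cfrac0 (\<lambda>k. \<beta>' (int k)) \<in> Kminus B" using assms(1) unfolding symmetric_shift_def by simp
  then obtain \<beta>'' where b: "\<beta>'' \<in> B" "cfrac0 (\<lambda>k. \<beta>' (int k)) = cfrac0 (\<lambda>k. \<beta>'' (- int k))"
    unfolding Kminus_def by auto
  have p1: "posn (\<lambda>k. \<beta>' (int k))" using assms pos_posn[of \<beta>' int] by blast
  have p2: "posn (\<lambda>k. \<beta>'' (- int k))" using assms b pos_posn[of \<beta>'' "\<lambda>k. - int k"] by blast
  have "1 / cfrac (\<lambda>k. \<beta>' (int k)) = 1 / cfrac (\<lambda>k. \<beta>'' (- int k))" using b(2) unfolding cfrac0_def .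
  then have "cfrac (\<lambda>k. \<beta>' (int k)) = cfrac (\<lambda>k. \<beta>'' (- int k))"
  proof -
    have "inverse (cfrac (\<lambda>k. \<beta>' (int k))) = inverse (cfrac (\<lambda>k. \<beta>'' (- int k)))"
      using \<open>1 / cfrac (\<lambda>k. \<beta>' (int k)) = 1 / cfrac (\<lambda>k. \<beta>'' (- int k))\<close> by (simp add: inverse_eq_divide)
    then show ?thesis by simp
  qed
  then have "\<forall>i. (\<lambda>k. \<beta>' (int k)) i = (\<lambda>k. \<beta>'' (- int k)) i"
    using cfrac_inj[OF p1 p2] by blast
  then show ?thesis using b(1) by auto
qed

lemma glue_left: "n \<le> int k \<Longrightarrow> glue \<alpha> k \<tau> \<upsilon> n = \<alpha> n"
  by (simp add: glue_def)

lemma glue_right: "n \<ge> int k + int (length \<tau>) + 1 \<Longrightarrow>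
    glue \<alpha> k \<tau> \<upsilon> n = \<upsilon> (nat (n - int k - int (length \<tau>) - 1))"
  by (simp add: glue_def)

lemma glue_pos:
  assumes "positive_seq \<alpha>" "\<forall>c\<in>set \<tau>. c \<ge> 1" "\<forall>i. \<upsilon> i \<ge> 1"
  shows "positive_seq (glue \<alpha> k \<tau> \<upsilon>)"
  unfolding positive_seq_def
proof
  fix n
  show "glue \<alpha> k \<tau> \<upsilon> n \<ge> 1"
  proof (cases "n \<le> int k")
    case True then show ?thesis using assms(1) by (simp add: glue_def positive_seq_def)
  next
    case False
    show ?thesis
    proof (cases "n \<le> int k + int (length \<tau>)")
      case True
      have "nat (n - int k - 1) < length \<tau>" using True False by linarith
      then have "\<tau> ! nat (n - int k - 1) \<in> set \<tau>" by simp
      then show ?thesis using True False assms(2) by (simp add: glue_def)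
    next
      case F2: False
      then show ?thesis using False assms(3) by (simp add: glue_def)
    qed
  qed
qed


lemma lam_bound:
  assumes "markov X < ereal m + ereal e"
  shows "lambda0 (shiftn n X) \<le> m + e"
proof -
  have "ereal (lambda0 (shiftn n X)) < ereal (m + e)"
    using lambda0_le_markov[of n X] assms by (metis le_less_trans plus_ereal.simps(1))
  then show ?thesis by simp
qed

theorem lemma3p4:
  fixes B C :: "bseq set" and x :: real and \<gamma> :: bseq
  assumes "sft B" and "sft C" and "B \<subseteq> C"
    and "transitive_shift B" and "transitive_shift C"
    and "symmetric_shift B" and "symmetric_shift C"
    and "\<forall>\<beta>\<in>B. markov \<beta> \<le> ereal x"
    and "\<gamma> \<in> C"
    and "markov \<gamma> = ereal (lambda0 \<gamma>)"
    and "lambda0 \<gamma> > x"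
    and "connects_pos \<gamma> B" and "connects_neg \<gamma> B"
  shows "lambda0 \<gamma> \<in> lagrange_spectrum"
proof -
  define m where "m = lambda0 \<gamma>"
  have posB: "\<forall>\<beta>\<in>B. positive_seq \<beta>" using sft_pos[OF assms(1)] by blast
  have posg: "positive_seq \<gamma>" using sft_pos[OF assms(2) assms(9)] .
  have mg: "markov \<gamma> = ereal m" using assms(10) m_def by simp
  have mgt: "markov (transpose_seq \<gamma>) = ereal m" using markov_transpose[OF posg] mg by simp
  have "\<forall>k. \<exists>p. (\<forall>c\<in>set (fst p). c \<ge> 1) \<and> snd p \<in> Sigma_plus B \<and>
      markov (glue \<gamma> k (fst p) (snd p)) < markov \<gamma> + ereal ((1/2)^k)"
    using assms(12) unfolding connects_pos_def by fastforce
  then obtain TU where TU: "\<forall>k. (\<forall>c\<in>set (fst (TU k)). c \<ge> 1) \<and> snd (TU k) \<in> Sigma_plus B \<and>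
      markov (glue \<gamma> k (fst (TU k)) (snd (TU k))) < markov \<gamma> + ereal ((1/2)^k)"
    using choice[of "\<lambda>k p. (\<forall>c\<in>set (fst p). c \<ge> 1) \<and> snd p \<in> Sigma_plus B \<and>
      markov (glue \<gamma> k (fst p) (snd p)) < markov \<gamma> + ereal ((1/2)^k)"] by blast
  have "\<forall>k. \<exists>p. (\<forall>c\<in>set (fst p). c \<ge> 1) \<and> snd p \<in> Sigma_plus B \<and>
      markov (glue (transpose_seq \<gamma>) k (fst p) (snd p)) < markov (transpose_seq \<gamma>) + ereal ((1/2)^k)"
    using assms(13) unfolding connects_neg_def connects_pos_def by fastforce
  then obtain TU2 where TU2: "\<forall>k. (\<forall>c\<in>set (fst (TU2 k)). c \<ge> 1) \<and> snd (TU2 k) \<in> Sigma_plus B \<and>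
      markov (glue (transpose_seq \<gamma>) k (fst (TU2 k)) (snd (TU2 k))) < markov (transpose_seq \<gamma>) + ereal ((1/2)^k)"
    using choice[of "\<lambda>k p. (\<forall>c\<in>set (fst p). c \<ge> 1) \<and> snd p \<in> Sigma_plus B \<and>
      markov (glue (transpose_seq \<gamma>) k (fst p) (snd p)) < markov (transpose_seq \<gamma>) + ereal ((1/2)^k)"] by blast
  define tau where "tau k = fst (TU k)" for k
  define ups where "ups k = snd (TU k)" for k
  define tau2 where "tau2 k = fst (TU2 k)" for k
  define ups2 where "ups2 k = snd (TU2 k)" for k
  have "\<forall>k. \<exists>\<beta>. \<beta> \<in> B \<and> ups k = (\<lambda>i. \<beta> (int i + 1))"
    using TU unfolding ups_def Sigma_plus_def by blast
  then obtain bet where bet: "\<forall>k. bet k \<in> B \<and> ups k = (\<lambda>i. bet k (int i + 1))"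
    using choice[of "\<lambda>k \<beta>. \<beta> \<in> B \<and> ups k = (\<lambda>i. \<beta> (int i + 1))"] by blast
  have "\<forall>k. \<exists>\<beta>. \<beta> \<in> B \<and> ups2 k = (\<lambda>i. \<beta> (int i + 1))"
    using TU2 unfolding ups2_def Sigma_plus_def by blast
  then obtain bet1 where bet1: "\<forall>k. bet1 k \<in> B \<and> ups2 k = (\<lambda>i. bet1 k (int i + 1))"
    using choice[of "\<lambda>k \<beta>. \<beta> \<in> B \<and> ups2 k = (\<lambda>i. \<beta> (int i + 1))"] by blast
  have "\<forall>k. \<exists>\<beta>. \<beta> \<in> B \<and> (\<forall>i::nat. bet1 k (int i) = \<beta> (- int i))"
    using sym_rev[OF assms(6) posB] bet1 by blast
  then obtain bet2 where bet2: "\<forall>k. bet2 k \<in> B \<and> (\<forall>i::nat. bet1 k (int i) = bet2 k (- int i))"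
    using choice[of "\<lambda>k \<beta>. \<beta> \<in> B \<and> (\<forall>i::nat. bet1 k (int i) = \<beta> (- int i))"] by blast
  define P where "P k = glue \<gamma> k (tau k) (ups k)" for k
  define Nt where "Nt k = transpose_seq (glue (transpose_seq \<gamma>) k (tau2 k) (ups2 k))" for k
  define c where "c k = int k + int (length (tau k))" for k
  define c' where "c' k = int k + int (length (tau2 k))" for k
  have posups: "\<forall>i. ups k i \<ge> 1" for k
    using bet posB unfolding positive_seq_def by auto
  have posups2: "\<forall>i. ups2 k i \<ge> 1" for k
    using bet1 posB unfolding positive_seq_def by auto
  have posP: "\<forall>k. positive_seq (P k)"
  proof
    fix k
    have "\<forall>c\<in>set (tau k). c \<ge> 1" using TU unfolding tau_def by blast
    then show "positive_seq (P k)" unfolding P_def using glue_pos[OF posg _ posups] by blast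
  qed
  have posG2: "positive_seq (glue (transpose_seq \<gamma>) k (tau2 k) (ups2 k))" for k
  proof -
    have "\<forall>c\<in>set (tau2 k). c \<ge> 1" using TU2 unfolding tau2_def by blast
    then show ?thesis using glue_pos[OF pos_transpose[OF posg] _ posups2] by blast
  qed
  have posN: "\<forall>k. positive_seq (Nt k)" unfolding Nt_def using posG2 pos_transpose by simp
  have F1: "\<forall>k n. n \<le> int k \<longrightarrow> P k n = \<gamma> n" unfolding P_def using glue_left by simp
  have F2: "\<forall>k n. n \<ge> c k + 1 \<longrightarrow> P k n = bet k (n - c k)"
  proof (intro allI impI)
    fix k n assume "n \<ge> c k + 1"
    then have "P k n = ups k (nat (n - c k - 1))" unfolding P_def c_def using glue_right
      by (simp add: algebra_simps)
    also have "\<dots> = bet k (n - c k)" using bet \<open>n \<ge> c k + 1\<close> by simp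
    finally show "P k n = bet k (n - c k)" .
  qed
  have F3: "\<forall>k n. n \<ge> - int k \<longrightarrow> Nt k n = \<gamma> n"
    unfolding Nt_def transpose_seq_def using glue_left by simp
  have F4: "\<forall>k n. n \<le> - c' k - 1 \<longrightarrow> Nt k n = bet2 k (n + c' k)"
  proof (intro allI impI)
    fix k n assume a: "n \<le> - c' k - 1"
    then have "Nt k n = ups2 k (nat (- n - c' k - 1))" unfolding Nt_def c'_def transpose_seq_def
      using glue_right by (simp add: algebra_simps)
    also have "\<dots> = bet1 k (- n - c' k)" using bet1 a by simp
    also have "\<dots> = bet1 k (int (nat (- n - c' k)))" using a by simp
    also have "\<dots> = bet2 k (- int (nat (- n - c' k)))" using bet2 by blast
    also have "\<dots> = bet2 k (n + c' k)" using a by (simp add: add.commute)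
    finally show "Nt k n = bet2 k (n + c' k)" .
  qed
  have cb: "\<forall>k. c k \<ge> int k" and cb': "\<forall>k. c' k \<ge> int k" unfolding c_def c'_def by auto
  have bP: "\<forall>k n. lambda0 (shiftn n (P k)) \<le> m + (1/2)^k"
  proof (intro allI)
    fix k n
    have "markov (P k) < ereal m + ereal ((1/2)^k)"
      using TU[rule_format, of k] mg unfolding P_def tau_def ups_def by simp
    then show "lambda0 (shiftn n (P k)) \<le> m + (1/2)^k" by (rule lam_bound)
  qed
  have bN: "\<forall>k n. lambda0 (shiftn n (Nt k)) \<le> m + (1/2)^k"
  proof (intro allI)
    fix k n
    have "markov (Nt k) = markov (glue (transpose_seq \<gamma>) k (tau2 k) (ups2 k))"
      unfolding Nt_def using markov_transpose[OF posG2] by simp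
    also have "\<dots> < ereal m + ereal ((1/2)^k)" using TU2[rule_format, of k] mgt unfolding tau2_def ups2_def by simp
    finally show "lambda0 (shiftn n (Nt k)) \<le> m + (1/2)^k" by (rule lam_bound)
  qed
  have "\<forall>i. \<exists>q. fst q \<in> B \<and> snd q \<ge> int (2 * Suc i + 1) \<and>
      (\<forall>t<2 * Suc i + 1. fst q (int t) = bet (Suc i) (1 + int t)) \<and>
      (\<forall>t<2 * Suc i + 1. fst q (snd q + int t) = bet2 (Suc (Suc i)) ((-1 - 2 * int (Suc i)) + int t))"
  proof
    fix i
    have b1: "bet (Suc i) \<in> B" and b2: "bet2 (Suc (Suc i)) \<in> B" using bet bet2 by auto
    obtain \<theta> p where "\<theta> \<in> B" "p \<ge> int (2 * Suc i + 1)"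
      "\<forall>t<2 * Suc i + 1. \<theta> (int t) = bet (Suc i) (1 + int t)"
      "\<forall>t<2 * Suc i + 1. \<theta> (p + int t) = bet2 (Suc (Suc i)) ((-1 - 2 * int (Suc i)) + int t)"
      using assms(4)[unfolded transitive_shift_def, rule_format, OF b1 b2, where a=1 and b="-1 - 2 * int (Suc i)" and k="2 * Suc i + 1"]
      by (auto simp: algebra_simps)
    then show "\<exists>q. fst q \<in> B \<and> snd q \<ge> int (2 * Suc i + 1) \<and>
      (\<forall>t<2 * Suc i + 1. fst q (int t) = bet (Suc i) (1 + int t)) \<and>
      (\<forall>t<2 * Suc i + 1. fst q (snd q + int t) = bet2 (Suc (Suc i)) ((-1 - 2 * int (Suc i)) + int t))"
      by (intro exI[of _ "(\<theta>, p)"]) simp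
  qed
  then obtain Q where Q: "\<forall>i. fst (Q i) \<in> B \<and> snd (Q i) \<ge> int (2 * Suc i + 1) \<and>
      (\<forall>t<2 * Suc i + 1. fst (Q i) (int t) = bet (Suc i) (1 + int t)) \<and>
      (\<forall>t<2 * Suc i + 1. fst (Q i) (snd (Q i) + int t) = bet2 (Suc (Suc i)) ((-1 - 2 * int (Suc i)) + int t))"
    using choice[of "\<lambda>i q. fst q \<in> B \<and> snd q \<ge> int (2 * Suc i + 1) \<and>
      (\<forall>t<2 * Suc i + 1. fst q (int t) = bet (Suc i) (1 + int t)) \<and>
      (\<forall>t<2 * Suc i + 1. fst q (snd q + int t) = bet2 (Suc (Suc i)) ((-1 - 2 * int (Suc i)) + int t))"] by blast
  define thJ where "thJ i = fst (Q i)" for i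
  define pJ where "pJ i = snd (Q i)" for i
  have posJ: "\<forall>i. positive_seq (thJ i)" using Q posB unfolding thJ_def by blast
  have bJ: "\<forall>i n. lambda0 (shiftn n (thJ i)) \<le> m"
  proof (intro allI)
    fix i n
    have "ereal (lambda0 (shiftn n (thJ i))) \<le> ereal x"
    proof -
      have "thJ i \<in> B" using Q unfolding thJ_def by blast
      then have "markov (thJ i) \<le> ereal x" using assms(8) by blast
      then show ?thesis using lambda0_le_markov[of n "thJ i"] by (rule order_trans[rotated])
    qed
    then show "lambda0 (shiftn n (thJ i)) \<le> m" using assms(11) m_def by simp
  qed
  have J1: "\<forall>i. \<forall>t::nat. t < 2 * Suc i + 1 \<longrightarrow> thJ i (int t) = bet (Suc i) (1 + int t)"
    using Q unfolding thJ_def by blast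
  have J2: "\<forall>i. \<forall>t::nat. t < 2 * Suc i + 1 \<longrightarrow>
              thJ i (pJ i + int t) = bet2 (Suc (Suc i)) (-1 - 2 * int (Suc i) + int t)"
    using Q unfolding thJ_def pJ_def by blast
  have pJ: "\<forall>i. pJ i \<ge> 2 * int (Suc i) + 1" using Q unfolding pJ_def by simp
  obtain \<theta> where "positive_seq \<theta>" "lagrange \<theta> = ereal m"
    using construct[OF posg posP posN posJ m_def F1 F2 F3 F4 cb cb' bP bN bJ J1 J2 pJ] by blast
  then show ?thesis unfolding lagrange_spectrum_def m_def by blast
qed

end
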